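(* Let $\Gamma$ be the banana graph of genus $g\ge1$: two vertices $v_1,v_2$ joined by $n=g+1$ edges $e_1,\dots,e_n$. Fix any orientation $\iota$ of $\Gamma$. Let $B_0\in\mathbb Z^{g\times n}$ have $(B_0)_{i,1}=1$, $(B_0)_{i,i+1}=-1$ and other entries $0$, let $S$ be the $n\times n$ diagonal matrix with $S_{jj}=1$ if $\iota$ orients $e_j$ from $v_2$ to $v_1$ and $S_{jj}=-1$ otherwise, and set $B=B_0S$ and $Q=BB^T$. Then the map $\phi$ sending a vertex $\mathbf a$ of $V_Q$ to the orientation $\iota_{\mathbf a}$ of $\Gamma$ defined by: $\iota_{\mathbf a}(e_i)=\iota(e_i)$ if $(B^T\mathbf a)_i>0$, and $\iota_{\mathbf a}(e_i)$ is the reverse of $\iota(e_i)$ if $(B^T\mathbf a)_i<0$, is a well-defined bijection from the vertex set of $V_Q$ onto the set $\mathcal O(\Gamma)$ of strongly connected orientations of $\Gamma$; moreover the orientation $\iota_{\mathbf a}$ does not depend on the choice of $\iota$.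
   Context: $V_Q=\{\mathbf a\in\mathbb R^g:\ \mathbf a^TQ\mathbf a\le(\mathbf a-\mathbf c)^TQ(\mathbf a-\mathbf c)\ \forall\mathbf c\in\mathbb Z^g\}$. Rows of $B$ are the coordinates, with respect to the $\iota$-oriented edges, of the cycles $e_1-e_{i+1}$ ($i=1,\dots,g$) (written for the orientation in which every edge goes from $v_2$ to $v_1$). An orientation of a connected graph is strongly connected if for every ordered pair of vertices $(u,v)$ there is a directed path from $u$ to $v$. *)

theory Defs
  imports "HOL-Analysis.Analysis"
begin

text \<open>Coordinates of Z^g / R^g are indexed by a finite type 'g (g = CARD('g) \<ge> 1);
  edges are indexed by 'g option: None is e_1, Some i is e_(i+1).\<close>

datatype bvert = V1 | V2

text \<open>An orientation assigns to each edge its (tail, head) pair.\<close>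
definition is_orientation :: "('g option \<Rightarrow> bvert \<times> bvert) \<Rightarrow> bool" where
  "is_orientation \<iota> \<longleftrightarrow> (\<forall>e. \<iota> e = (V2, V1) \<or> \<iota> e = (V1, V2))"

definition strongly_connected_ori :: "('g option \<Rightarrow> bvert \<times> bvert) \<Rightarrow> bool" where
  "strongly_connected_ori \<iota> \<longleftrightarrow> (\<forall>u v. (u, v) \<in> (range \<iota>)\<^sup>*)"

definition B0mat :: "real ^ ('g::finite option) ^ 'g" where
  "B0mat = (\<chi> i j. if j = None then 1 else if j = Some i then -1 else 0)"

definition Smat :: "('g::finite option \<Rightarrow> bvert \<times> bvert) \<Rightarrow> real ^ ('g option) ^ ('g option)" where
  "Smat \<iota> = (\<chi> j k. if j = k then (if \<iota> j = (V2, V1) then 1 else -1) else 0)"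

definition Bmat :: "('g::finite option \<Rightarrow> bvert \<times> bvert) \<Rightarrow> real ^ ('g option) ^ 'g" where
  "Bmat \<iota> = B0mat ** Smat \<iota>"

definition Qmat :: "('g::finite option \<Rightarrow> bvert \<times> bvert) \<Rightarrow> real ^ 'g ^ 'g" where
  "Qmat \<iota> = Bmat \<iota> ** transpose (Bmat \<iota>)"

definition voronoi_cell :: "real ^ 'g ^ 'g \<Rightarrow> (real ^ 'g::finite) set" where
  "voronoi_cell Q = {a. \<forall>c. (\<forall>i. c $ i \<in> \<int>) \<longrightarrow>
       a \<bullet> (Q *v a) \<le> (a - c) \<bullet> (Q *v (a - c))}"

definition ori_of_vertex ::
  "('g::finite option \<Rightarrow> bvert \<times> bvert) \<Rightarrow> real ^ 'g \<Rightarrow> ('g option \<Rightarrow> bvert \<times> bvert)" where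
  "ori_of_vertex \<iota> a = (\<lambda>e. if (transpose (Bmat \<iota>) *v a) $ e > 0 then \<iota> e else prod.swap (\<iota> e))"

end

theory Submission
  imports Defs
begin


definition XX :: "real ^ ('g::finite) \<Rightarrow> real ^ ('g option)" where
  "XX a = transpose B0mat *v a"

definition sg :: "('g option \<Rightarrow> bvert \<times> bvert) \<Rightarrow> 'g option \<Rightarrow> real" where
  "sg \<iota> e = (if \<iota> e = (V2, V1) then 1 else -1)"

lemma sum_option: "(\<Sum>e\<in>(UNIV::'g::finite option set). f e) = f None + (\<Sum>i\<in>UNIV. f (Some i))"
proof -
  have "(\<Sum>e\<in>(UNIV::'g option set). f e) = (\<Sum>e\<in>insert None (range Some). f e)"
    by (simp only: UNIV_option_conv)
  also have "\<dots> = f None + (\<Sum>e\<in>range Some. f e)" by (subst sum.insert) auto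
  also have "(\<Sum>e\<in>range Some. f e) = (\<Sum>i\<in>UNIV. f (Some i))" by (subst sum.reindex) auto
  finally show ?thesis .
qed

lemma XX_None: "XX a $ None = (\<Sum>i\<in>UNIV. a $ i)"
  by (simp add: XX_def B0mat_def matrix_vector_mult_def transpose_def)

lemma XX_Some: "XX a $ Some i = - a $ i"
proof -
  have "XX a $ Some i = (\<Sum>j\<in>UNIV. (if i = j then - a $ j else 0))"
    unfolding XX_def B0mat_def matrix_vector_mult_def transpose_def vec_lambda_beta
    by (rule sum.cong) auto
  then show ?thesis by simp
qed

lemma XX_sum: "(\<Sum>e\<in>UNIV. XX a $ e) = 0"
  by (simp add: sum_option XX_None XX_Some sum_negf)

lemma XX_inj: "XX a = XX b \<Longrightarrow> a = b"
  by (metis XX_Some neg_equal_iff_equal vec_eq_iff)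

lemma XX_surj: "(\<Sum>e\<in>UNIV. y $ e) = 0 \<Longrightarrow> XX (\<chi> i. - y $ Some i) = (y :: real ^ ('g::finite option))"
  unfolding vec_eq_iff
proof
  fix e :: "'g option"
  assume s: "(\<Sum>e\<in>UNIV. y $ e) = 0"
  show "XX (\<chi> i. - y $ Some i) $ e = y $ e"
  proof (cases e)
    case None
    then show ?thesis using s by (simp add: XX_None sum_option sum_negf)
  qed (simp add: XX_Some)
qed

lemma XX_diff: "XX (a - b) = XX a - XX b"
  by (simp add: XX_def matrix_vector_mult_diff_distrib)

lemma XX_comb: "XX (u *\<^sub>R a + v *\<^sub>R b) = u *\<^sub>R XX a + v *\<^sub>R XX b"
  by (simp add: XX_def matrix_vector_right_distrib matrix_vector_mult_scaleR)

lemma Y_eq: "(transpose (Bmat \<iota>) *v a) $ e = sg \<iota> e * XX a $ e"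
  by (simp add: Bmat_def Smat_def sg_def XX_def matrix_matrix_mult_def matrix_vector_mult_def transpose_def
     if_distrib sum_negf cong: if_cong)

lemma sg_sq: "sg \<iota> e * sg \<iota> e = 1"
  by (simp add: sg_def)

lemma quad: "a \<bullet> (Qmat \<iota> *v a) = XX a \<bullet> XX a"
proof -
  have "a \<bullet> (Qmat \<iota> *v a) = (transpose (Bmat \<iota>) *v a) \<bullet> (transpose (Bmat \<iota>) *v a)"
    by (simp add: Qmat_def dot_lmul_matrix flip: matrix_vector_mul_assoc)
  also have "\<dots> = XX a \<bullet> XX a"
    unfolding inner_vec_def Y_eq
    by (rule sum.cong) (auto simp: sg_def)
  finally show ?thesis .
qed


lemma vor_pre: "a \<in> voronoi_cell (Qmat \<iota>) \<longleftrightarrow>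
   (\<forall>c. (\<forall>i. c $ i \<in> \<int>) \<longrightarrow> 2 * (XX a \<bullet> XX c) \<le> XX c \<bullet> XX c)"
  unfolding voronoi_cell_def quad XX_diff
  by (simp add: inner_diff_left inner_diff_right inner_commute[of "XX c" "XX a" for c])

lemma XX_Ints: "\<forall>i. c $ i \<in> \<int> \<Longrightarrow> XX c $ e \<in> \<int>"
  by (cases e) (auto simp: XX_None XX_Some intro!: Ints_sum)

lemma int_ineq: "(y::real) \<in> \<int> \<Longrightarrow> 0 \<le> d \<Longrightarrow> d \<le> 1 \<Longrightarrow> 2 * (d * y) \<le> y * y + y"
proof -
  assume "y \<in> \<int>" "0 \<le> d" "d \<le> 1"
  then obtain n where n: "y = of_int n" by (auto elim: Ints_cases)
  consider "n \<ge> 1" | "n = 0" | "n \<le> -1" by linarith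
  then show ?thesis
  proof cases
    case 1
    then have "y \<ge> 1" using n by simp
    have "d * y \<le> 1 * y" using \<open>d \<le> 1\<close> \<open>y \<ge> 1\<close> by (intro mult_right_mono) auto
    moreover have "1 * y \<le> y * y" using \<open>y \<ge> 1\<close> by (intro mult_right_mono) auto
    ultimately show ?thesis by linarith
  next
    case 2 then show ?thesis using n by simp
  next
    case 3
    then have "y \<le> -1" using n by simp
    have "d * y \<le> 0" using \<open>0 \<le> d\<close> \<open>y \<le> -1\<close> by (simp add: mult_nonneg_nonpos)
    moreover have "0 \<le> y * (y + 1)" using \<open>y \<le> -1\<close> by (intro mult_nonpos_nonpos) auto
    then have "0 \<le> y * y + y" by (simp add: algebra_simps)
    ultimately show ?thesis by linarith
  qed
qed

lemma vor: "a \<in> voronoi_cell (Qmat \<iota>) \<longleftrightarrow> (\<forall>j k. XX a $ j - XX a $ k \<le> 1)"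
proof
  assume V: "a \<in> voronoi_cell (Qmat \<iota>)"
  show "\<forall>j k. XX a $ j - XX a $ k \<le> 1"
  proof (intro allI)
    fix j k :: "'a option"
    show "XX a $ j - XX a $ k \<le> 1"
    proof (cases "j = k")
      case False
      define y :: "real ^ ('a option)" where "y = axis j 1 - axis k 1"
      have sa: "(\<Sum>e\<in>UNIV. axis i (1::real) $ e) = 1" for i :: "'a option"
        unfolding axis_def by simp
      have sy: "(\<Sum>e\<in>UNIV. y $ e) = 0"
        unfolding y_def vector_minus_component sum_subtractf sa by simp
      define c :: "real ^ 'a" where "c = (\<chi> i. - y $ Some i)"
      have Xc: "XX c = y" using XX_surj[OF sy] c_def by simp
      have ci: "\<forall>i. c $ i \<in> \<int>"
        unfolding c_def y_def axis_def by auto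
      have "2 * (XX a \<bullet> XX c) \<le> XX c \<bullet> XX c" using V ci unfolding vor_pre by blast
      then have "2 * (XX a \<bullet> y) \<le> y \<bullet> y" unfolding Xc .
      moreover have "XX a \<bullet> y = XX a $ j - XX a $ k"
        by (simp add: y_def inner_diff_right inner_axis)
      moreover have "y \<bullet> y = 2"
        using False by (simp add: y_def inner_diff_right inner_diff_left inner_axis_axis)
      ultimately show ?thesis by simp
    qed simp
  qed
next
  assume D: "\<forall>j k. XX a $ j - XX a $ k \<le> 1"
  show "a \<in> voronoi_cell (Qmat \<iota>)"
    unfolding vor_pre
  proof (intro allI impI)
    fix c :: "real ^ 'a"
    assume ci: "\<forall>i. c $ i \<in> \<int>"
    define x where "x = XX a"
    define y where "y = XX c"
    define m where "m = Min (range (\<lambda>e. x $ e))"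
    have m1: "m \<le> x $ e" for e unfolding m_def by simp
    have "m \<in> range (\<lambda>e. x $ e)" unfolding m_def by (rule Min_in) auto
    then obtain e0 where e0: "m = x $ e0" by auto
    have m2: "x $ e \<le> m + 1" for e using D[rule_format, of e e0] e0 unfolding x_def by linarith
    have yi: "y $ e \<in> \<int>" for e unfolding y_def using XX_Ints[OF ci] .
    have sy: "(\<Sum>e\<in>UNIV. y $ e) = 0" unfolding y_def by (rule XX_sum)
    have ti: "2 * ((x $ e - m) * y $ e) \<le> y $ e * y $ e + y $ e" for e
      by (rule int_ineq[OF yi]) (use m1[of e] m2[of e] in linarith)+
    have "(\<Sum>e\<in>UNIV. 2 * ((x $ e - m) * y $ e)) \<le> (\<Sum>e\<in>UNIV. y $ e * y $ e + y $ e)"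
      by (rule sum_mono) (rule ti)
    moreover have "(\<Sum>e\<in>UNIV. 2 * ((x $ e - m) * y $ e)) = (\<Sum>e\<in>UNIV. 2 * (x $ e * y $ e) - (2 * m) * y $ e)"
      by (rule sum.cong) (simp_all add: algebra_simps)
    moreover have "(\<Sum>e\<in>UNIV. 2 * (x $ e * y $ e) - (2 * m) * y $ e) = 2 * (\<Sum>e\<in>UNIV. x $ e * y $ e) - (2 * m) * (\<Sum>e\<in>UNIV. y $ e)"
      by (simp only: sum_subtractf sum_distrib_left)
    moreover have "(\<Sum>e\<in>UNIV. x $ e * y $ e) = x \<bullet> y" by (simp add: inner_vec_def)
    moreover have "(2 * m) * (\<Sum>e\<in>UNIV. y $ e) = 0" using sy by simp
    moreover have "(\<Sum>e\<in>UNIV. y $ e * y $ e + y $ e) = y \<bullet> y + (\<Sum>e\<in>UNIV. y $ e)"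
      by (simp only: inner_vec_def sum.distrib inner_real_def)
    ultimately have "2 * (x \<bullet> y) \<le> y \<bullet> y" using sy by linarith
    then show "2 * (XX a \<bullet> XX c) \<le> XX c \<bullet> XX c" unfolding x_def y_def .
  qed
qed



lemma shift0:
  fixes f g :: "'g::finite option \<Rightarrow> real"
  assumes "(\<Sum>e\<in>UNIV. f e) = 0" "(\<Sum>e\<in>UNIV. g e) = 0" "\<And>e. f e - g e = r"
  shows "r = 0"
proof -
  have "(\<Sum>e\<in>(UNIV::'g option set). f e - g e) = 0" using assms(1,2) by (simp add: sum_subtractf)
  then have "real CARD('g option) * r = 0" using assms(3) by simp
  then show ?thesis by simp
qed

lemma ext_nec:
  fixes a :: "real ^ 'g::finite"
  assumes E: "a extreme_point_of voronoi_cell (Qmat \<iota>)"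
  shows "\<exists>j. XX a $ k - XX a $ j = 1 \<or> XX a $ j - XX a $ k = 1"
proof (rule ccontr)
  assume N: "\<not> ?thesis"
  define x where "x = XX a"
  have aV: "a \<in> voronoi_cell (Qmat \<iota>)" using E by (simp add: extreme_point_of_def)
  then have D: "x $ j - x $ l \<le> 1" for j l unfolding vor x_def by blast
  have lt: "\<bar>x $ k - x $ j\<bar> < 1" for j
  proof -
    have "x $ k - x $ j \<noteq> 1" "x $ j - x $ k \<noteq> 1" using N unfolding x_def by auto
    then show ?thesis using D[of k j] D[of j k] unfolding abs_less_iff by linarith
  qed
  define \<delta> where "\<delta> = Min (range (\<lambda>j. 1 - \<bar>x $ k - x $ j\<bar>))"
  have dpos: "\<delta> > 0" unfolding \<delta>_def using lt by (subst Min_gr_iff) auto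
  have dle: "\<delta> \<le> 1 - \<bar>x $ k - x $ j\<bar>" for j unfolding \<delta>_def by (rule Min_le) auto
  define n where "n = real CARD('g option)"
  have npos: "n > 0" unfolding n_def by (simp add: finite_UNIV_card_ge_0)
  define \<epsilon> where "\<epsilon> = \<delta> / n"
  have epos: "\<epsilon> > 0" unfolding \<epsilon>_def using dpos npos by simp
  have en: "\<epsilon> * n = \<delta>" unfolding \<epsilon>_def using npos by simp
  define y :: "real ^ ('g option)" where "y = (\<chi> e. (if e = k then n else 0) - 1)"
  have sy: "(\<Sum>e\<in>UNIV. y $ e) = 0"
    by (simp add: y_def sum_subtractf n_def)
  define d :: "real ^ 'g" where "d = (\<chi> i. - y $ Some i)"
  have Xd: "XX d = y" using XX_surj[OF sy] d_def by simp
  have Xpm: "XX (a + s *\<^sub>R d) = x + s *\<^sub>R y" for s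
    using XX_comb[of 1 a s d] Xd x_def by simp
  have yv: "y $ e = (if e = k then n else 0) - 1" for e unfolding y_def by simp
  have inV: "a + s *\<^sub>R d \<in> voronoi_cell (Qmat \<iota>)" if "\<bar>s\<bar> \<le> \<epsilon>" for s
    unfolding vor Xpm
  proof (intro allI)
    fix j l
    have "\<bar>s * n\<bar> = \<bar>s\<bar> * n" using npos by (simp add: abs_mult)
    moreover have "\<bar>s\<bar> * n \<le> \<epsilon> * n" using that npos by (simp add: mult_right_mono)
    ultimately have sn: "\<bar>s * n\<bar> \<le> \<delta>" using en by linarith
    have c: "(x + s *\<^sub>R y) $ j - (x + s *\<^sub>R y) $ l = x $ j - x $ l + s * (y $ j - y $ l)"
      by (simp add: algebra_simps)
    show "(x + s *\<^sub>R y) $ j - (x + s *\<^sub>R y) $ l \<le> 1"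
      unfolding c
    proof (cases "j = k")
      case True
      show "x $ j - x $ l + s * (y $ j - y $ l) \<le> 1"
      proof (cases "l = k")
        case False
        have "s * (y $ j - y $ l) = s * n" using True False by (simp add: yv)
        moreover have "s * n \<le> \<bar>s * n\<bar>" by simp
        moreover have "x $ k - x $ l \<le> \<bar>x $ k - x $ l\<bar>" by simp
        moreover have "x $ j = x $ k" using True by simp
        ultimately show ?thesis using sn dle[of l] by linarith
      qed (use True in simp)
    next
      case False
      show "x $ j - x $ l + s * (y $ j - y $ l) \<le> 1"
      proof (cases "l = k")
        case True
        have "s * (y $ j - y $ l) = - (s * n)" using True False by (simp add: yv)
        moreover have "- (s * n) \<le> \<bar>s * n\<bar>" by simp
        moreover have "x $ j - x $ k \<le> \<bar>x $ k - x $ j\<bar>" by simp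
        moreover have "x $ l = x $ k" using True by simp
        ultimately show ?thesis using sn dle[of j] by linarith
      next
        case False2: False
        have "s * (y $ j - y $ l) = 0" using False False2 by (simp add: yv)
        then show ?thesis using D[of j l] by linarith
      qed
    qed
  qed
  define j :: "'g option" where "j = (if k = None then Some undefined else None)"
  have jk: "j \<noteq> k" unfolding j_def by auto
  have "y $ j \<noteq> 0" using jk by (simp add: yv)
  moreover have X0: "XX 0 = 0" by (simp add: XX_def)
  ultimately have "d \<noteq> 0" using Xd by (metis zero_index)
  then have "\<epsilon> *\<^sub>R d \<noteq> (-\<epsilon>) *\<^sub>R d" using epos by (simp only: scaleR_cancel_right) auto
  then have neq: "a + \<epsilon> *\<^sub>R d \<noteq> a + (-\<epsilon>) *\<^sub>R d" by (metis add_left_cancel)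
  have mid: "a = (1 - 1/2) *\<^sub>R (a + \<epsilon> *\<^sub>R d) + (1/2) *\<^sub>R (a + (-\<epsilon>) *\<^sub>R d)"
    by (simp add: vec_eq_iff algebra_simps)
  have "a \<in> open_segment (a + \<epsilon> *\<^sub>R d) (a + (-\<epsilon>) *\<^sub>R d)"
    unfolding in_segment(2) using neq mid by (intro conjI exI[of _ "1/2"]) auto
  then show False using E inV[of \<epsilon>] inV[of "-\<epsilon>"] epos unfolding extreme_point_of_def by auto
qed



lemma sum_neg_strict:
  fixes f :: "'g::finite option \<Rightarrow> real"
  assumes "\<And>e. f e \<le> 0" "f e1 < 0"
  shows "(\<Sum>e\<in>UNIV. f e) < 0"
proof -
  have "(\<Sum>e\<in>UNIV. f e) < (\<Sum>e\<in>(UNIV::'g option set). 0)"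
    by (rule sum_strict_mono_ex1) (use assms in auto)
  then show ?thesis by simp
qed

lemma sum_pos_strict:
  fixes f :: "'g::finite option \<Rightarrow> real"
  assumes "\<And>e. 0 \<le> f e" "0 < f e1"
  shows "0 < (\<Sum>e\<in>UNIV. f e)"
proof -
  have "(\<Sum>e\<in>(UNIV::'g option set). 0) < (\<Sum>e\<in>UNIV. f e)"
    by (rule sum_strict_mono_ex1) (use assms in auto)
  then show ?thesis by simp
qed

lemma ext_form:
  fixes a :: "real ^ 'g::finite"
  assumes E: "a extreme_point_of voronoi_cell (Qmat \<iota>)"
  shows "\<exists>t. 0 < t \<and> t < 1 \<and> (\<forall>e. XX a $ e = t \<or> XX a $ e = t - 1)
           \<and> (\<exists>e. XX a $ e = t) \<and> (\<exists>e. XX a $ e = t - 1)"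
proof -
  define x where "x = XX a"
  have aV: "a \<in> voronoi_cell (Qmat \<iota>)" using E by (simp add: extreme_point_of_def)
  then have D: "x $ j - x $ l \<le> 1" for j l unfolding vor x_def by blast
  have nec: "\<exists>j. x $ k - x $ j = 1 \<or> x $ j - x $ k = 1" for k
    using ext_nec[OF E] unfolding x_def by blast
  obtain j where j: "x $ None - x $ j = 1 \<or> x $ j - x $ None = 1" using nec by blast
  define t where "t = max (x $ None) (x $ j)"
  have hi: "x $ e \<le> t" for e using D[of e None] D[of e j] j unfolding t_def by linarith
  have lo: "t - 1 \<le> x $ e" for e using D[of None e] D[of j e] j unfolding t_def by linarith
  have vals: "x $ e = t \<or> x $ e = t - 1" for e
  proof -
    obtain j' where "x $ e - x $ j' = 1 \<or> x $ j' - x $ e = 1" using nec by blast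
    then show ?thesis using hi[of e] lo[of e] hi[of j'] lo[of j'] by linarith
  qed
  have ex: "(\<exists>e. x $ e = t) \<and> (\<exists>e. x $ e = t - 1)"
    using j
  proof
    assume h: "x $ None - x $ j = 1"
    then have "t = x $ None" unfolding t_def by simp
    then have "x $ None = t" "x $ j = t - 1" using h by linarith+
    then show ?thesis by blast
  next
    assume h: "x $ j - x $ None = 1"
    then have "t = x $ j" unfolding t_def by simp
    then have "x $ j = t" "x $ None = t - 1" using h by linarith+
    then show ?thesis by blast
  qed
  then have ex1: "\<exists>e. x $ e = t" and ex2: "\<exists>e. x $ e = t - 1" by auto
  have sx: "(\<Sum>e\<in>UNIV. x $ e) = 0" unfolding x_def by (rule XX_sum)
  have tpos: "0 < t"
  proof (rule ccontr)
    assume "\<not> 0 < t"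
    then have "x $ e \<le> 0" for e using hi[of e] by linarith
    moreover obtain e1 where "x $ e1 = t - 1" using ex2 by blast
    ultimately have "(\<Sum>e\<in>UNIV. x $ e) < 0" using \<open>\<not> 0 < t\<close>
      by (intro sum_neg_strict[of _ e1]) auto
    then show False using sx by simp
  qed
  have tlt: "t < 1"
  proof (rule ccontr)
    assume "\<not> t < 1"
    then have "0 \<le> x $ e" for e using lo[of e] by linarith
    moreover obtain e1 where "x $ e1 = t" using ex1 by blast
    ultimately have "0 < (\<Sum>e\<in>UNIV. x $ e)" using \<open>\<not> t < 1\<close>
      by (intro sum_pos_strict[of _ e1]) auto
    then show False using sx by simp
  qed
  show ?thesis using tpos tlt vals ex1 ex2 unfolding x_def by blast
qed

lemma conv_eq:
  fixes u p q :: real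
  assumes "0 < u" "u < 1" "p \<le> 1" "q \<le> 1" "(1 - u) * p + u * q = 1"
  shows "p = 1 \<and> q = 1"
proof (rule ccontr)
  assume "\<not> (p = 1 \<and> q = 1)"
  then have "p < 1 \<or> q < 1" using assms by linarith
  moreover have "(1 - u) * p \<le> (1 - u) * 1" using assms by (intro mult_left_mono) auto
  moreover have "u * q \<le> u * 1" using assms by (intro mult_left_mono) auto
  moreover have "p < 1 \<Longrightarrow> (1 - u) * p < (1 - u) * 1" using assms by (intro mult_strict_left_mono) auto
  moreover have "q < 1 \<Longrightarrow> u * q < u * 1" using assms by (intro mult_strict_left_mono) auto
  ultimately show False using assms(5)
  proof -
    assume A: "p < 1 \<or> q < 1" "(1 - u) * p \<le> (1 - u) * 1" "u * q \<le> u * 1"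
      "p < 1 \<Longrightarrow> (1 - u) * p < (1 - u) * 1" "q < 1 \<Longrightarrow> u * q < u * 1"
      "(1 - u) * p + u * q = 1"
    from A(1) show False
    proof
      assume P: "p < 1"
      have L: "\<And>P Q. P < 1 - u \<Longrightarrow> Q \<le> u \<Longrightarrow> P + Q = 1 \<Longrightarrow> False" by linarith
      show False by (rule L[of "(1 - u) * p" "u * q"]) (use A(3) A(4)[OF P] A(6) in simp_all)
    next
      assume P: "q < 1"
      have L: "\<And>P Q. P \<le> 1 - u \<Longrightarrow> Q < u \<Longrightarrow> P + Q = 1 \<Longrightarrow> False" by linarith
      show False by (rule L[of "(1 - u) * p" "u * q"]) (use A(2) A(5)[OF P] A(6) in simp_all)
    qed
  qed
qed

lemma ext_suff:
  fixes a :: "real ^ 'g::finite"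
  assumes vals: "\<And>e. XX a $ e = t \<or> XX a $ e = t - 1" and j0: "XX a $ j0 = t" and l0: "XX a $ l0 = t - 1"
  shows "a extreme_point_of voronoi_cell (Qmat \<iota>)"
  unfolding extreme_point_of_def
proof (intro conjI ballI)
  define x where "x = XX a"
  show aV: "a \<in> voronoi_cell (Qmat \<iota>)"
    unfolding vor
  proof (intro allI)
    fix j l
    show "XX a $ j - XX a $ l \<le> 1" using vals[of j] vals[of l] by auto
  qed
  fix b c
  assume bV: "b \<in> voronoi_cell (Qmat \<iota>)" and cV: "c \<in> voronoi_cell (Qmat \<iota>)"
  show "a \<notin> open_segment b c"
  proof
    assume "a \<in> open_segment b c"
    then obtain u where bc: "b \<noteq> c" and u: "0 < u" "u < 1" and au: "a = (1 - u) *\<^sub>R b + u *\<^sub>R c"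
      unfolding in_segment(2) by blast
    have Xa: "x = (1 - u) *\<^sub>R XX b + u *\<^sub>R XX c" unfolding x_def au by (rule XX_comb)
    have Db: "XX b $ j - XX b $ l \<le> 1" for j l using bV unfolding vor by blast
    have Dc: "XX c $ j - XX c $ l \<le> 1" for j l using cV unfolding vor by blast
    have key: "XX b $ j - XX b $ l = 1 \<and> XX c $ j - XX c $ l = 1" if "x $ j = t" "x $ l = t - 1" for j l
    proof (rule conv_eq[OF u Db Dc])
      have "x $ j - x $ l = 1" using that by simp
      then show "(1 - u) * (XX b $ j - XX b $ l) + u * (XX c $ j - XX c $ l) = 1"
        unfolding Xa by (simp add: algebra_simps)
    qed
    have same: "XX z = x" if kz: "\<And>j l. x $ j = t \<Longrightarrow> x $ l = t - 1 \<Longrightarrow> XX z $ j - XX z $ l = 1"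
      for z :: "real ^ 'g"
    proof -
      define r where "r = XX z $ l0 - (t - 1)"
      have x0: "x $ j0 = t" "x $ l0 = t - 1" using j0 l0 unfolding x_def by auto
      have sh: "XX z $ e - x $ e = r" for e
      proof (cases "x $ e = t")
        case True
        then show ?thesis using kz[OF True x0(2)] unfolding r_def by simp
      next
        case False
        then have "x $ e = t - 1" using vals unfolding x_def by blast
        then show ?thesis using kz[OF x0(1) \<open>x $ e = t - 1\<close>] kz[OF x0] unfolding r_def by simp
      qed
      have "r = 0" by (rule shift0[of "\<lambda>e. XX z $ e" "\<lambda>e. x $ e"]) (use XX_sum sh x_def in auto)
      then show ?thesis using sh by (simp add: vec_eq_iff)
    qed
    have "XX b = x" by (rule same) (use key in blast)
    moreover have "XX c = x" by (rule same) (use key in blast)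
    ultimately have "b = c" using XX_inj by metis
    then show False using bc by simp
  qed
qed

lemma K:
  assumes "is_orientation \<iota>" "XX a $ e \<noteq> 0"
  shows "ori_of_vertex \<iota> a e = (if XX a $ e > 0 then (V2, V1) else (V1, V2))"
proof -
  have "\<iota> e = (V2, V1) \<or> \<iota> e = (V1, V2)" using assms(1) unfolding is_orientation_def by blast
  then show ?thesis using assms(2) unfolding ori_of_vertex_def Y_eq sg_def
    by (auto simp: zero_less_mult_iff)
qed



theorem theorem3p10:
  fixes \<iota> :: "('g::finite) option \<Rightarrow> bvert \<times> bvert"
  assumes "is_orientation \<iota>"
  shows "(\<forall>a. a extreme_point_of voronoi_cell (Qmat \<iota>) \<longrightarrow>
             (\<forall>e. (transpose (Bmat \<iota>) *v a) $ e \<noteq> 0))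
       \<and> bij_betw (ori_of_vertex \<iota>) {a. a extreme_point_of voronoi_cell (Qmat \<iota>)}
                 {\<kappa>. is_orientation \<kappa> \<and> strongly_connected_ori \<kappa>}
       \<and> (\<forall>\<iota>'. is_orientation \<iota>' \<longrightarrow>
             (\<forall>a. a extreme_point_of voronoi_cell (Qmat \<iota>) \<longrightarrow>
                  ori_of_vertex \<iota>' a = ori_of_vertex \<iota> a))"
proof -
  note ori = assms
  have nz: "XX a $ e \<noteq> 0" if E0: "a extreme_point_of voronoi_cell (Qmat \<iota>)" for a e
  proof -
    obtain t where "0 < t" "t < 1" "XX a $ e = t \<or> XX a $ e = t - 1"
      using ext_form[OF E0] by blast
    then show ?thesis by auto
  qed
  have P1: "\<forall>a. a extreme_point_of voronoi_cell (Qmat \<iota>) \<longrightarrow>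
             (\<forall>e. (transpose (Bmat \<iota>) *v a) $ e \<noteq> 0)"
  proof (intro allI impI)
    fix a e assume E: "a extreme_point_of voronoi_cell (Qmat \<iota>)"
    show "(transpose (Bmat \<iota>) *v a) $ e \<noteq> 0" unfolding Y_eq using nz[OF E, of e] by (simp add: sg_def)
  qed
  have P3: "\<forall>\<iota>'. is_orientation \<iota>' \<longrightarrow>
             (\<forall>a. a extreme_point_of voronoi_cell (Qmat \<iota>) \<longrightarrow>
                  ori_of_vertex \<iota>' a = ori_of_vertex \<iota> a)"
  proof (intro allI impI)
    fix \<iota>' :: "'g option \<Rightarrow> bvert \<times> bvert" and a :: "real ^ 'g"
    assume o': "is_orientation \<iota>'" and E: "a extreme_point_of voronoi_cell (Qmat \<iota>)"
    show "ori_of_vertex \<iota>' a = ori_of_vertex \<iota> a"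
    proof
      fix e
      show "ori_of_vertex \<iota>' a e = ori_of_vertex \<iota> a e"
        using K[OF o' nz[OF E]] K[OF ori nz[OF E]] by simp
    qed
  qed
  have inj: "inj_on (ori_of_vertex \<iota>) {a. a extreme_point_of voronoi_cell (Qmat \<iota>)}"
  proof (rule inj_onI)
    fix a b
    assume Ea: "a \<in> {a. a extreme_point_of voronoi_cell (Qmat \<iota>)}"
      and Eb: "b \<in> {a. a extreme_point_of voronoi_cell (Qmat \<iota>)}"
      and eq: "ori_of_vertex \<iota> a = ori_of_vertex \<iota> b"
    from Ea Eb have Ea: "a extreme_point_of voronoi_cell (Qmat \<iota>)"
      and Eb: "b extreme_point_of voronoi_cell (Qmat \<iota>)" by auto
    obtain ta where ta: "0 < ta" "ta < 1" "\<And>e. XX a $ e = ta \<or> XX a $ e = ta - 1"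
      using ext_form[OF Ea] by blast
    obtain tb where tb: "0 < tb" "tb < 1" "\<And>e. XX b $ e = tb \<or> XX b $ e = tb - 1"
      using ext_form[OF Eb] by blast
    have pos: "XX a $ e > 0 \<longleftrightarrow> XX b $ e > 0" for e
    proof -
      have "ori_of_vertex \<iota> a e = ori_of_vertex \<iota> b e" using eq by simp
      then show ?thesis using K[OF ori nz[OF Ea]] K[OF ori nz[OF Eb]]
        by (auto split: if_splits)
    qed
    have sh: "XX a $ e - XX b $ e = ta - tb" for e
      using ta(1,2) tb(1,2) ta(3)[of e] tb(3)[of e] pos[of e] by auto
    have "ta - tb = 0"
      by (rule shift0[of "\<lambda>e. XX a $ e" "\<lambda>e. XX b $ e"]) (use XX_sum sh in auto)
    then have "XX a = XX b" using sh by (simp add: vec_eq_iff)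
    then show "a = b" by (rule XX_inj)
  qed
  have img1: "ori_of_vertex \<iota> a \<in> {\<kappa>. is_orientation \<kappa> \<and> strongly_connected_ori \<kappa>}"
    if E: "a extreme_point_of voronoi_cell (Qmat \<iota>)" for a
  proof -
    obtain t where t: "0 < t" "t < 1" "\<And>e. XX a $ e = t \<or> XX a $ e = t - 1"
      "\<exists>e. XX a $ e = t" "\<exists>e. XX a $ e = t - 1"
      using ext_form[OF E] by blast
    obtain e1 e2 where e1: "XX a $ e1 = t" and e2: "XX a $ e2 = t - 1" using t(4,5) by blast
    let ?k = "ori_of_vertex \<iota> a"
    have k: "?k e = (if XX a $ e > 0 then (V2, V1) else (V1, V2))" for e
      using K[OF ori nz[OF E]] .
    have k1: "?k e1 = (V2, V1)" using k[of e1] e1 t(1) by simp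
    have k2: "?k e2 = (V1, V2)" using k[of e2] e2 t(2) by simp
    have "is_orientation ?k" unfolding is_orientation_def using k by simp
    moreover have "strongly_connected_ori ?k"
      unfolding strongly_connected_ori_def
    proof (intro allI)
      fix u v
      have r1: "(V2, V1) \<in> range ?k" using k1 by (metis rangeI)
      have r2: "(V1, V2) \<in> range ?k" using k2 by (metis rangeI)
      show "(u, v) \<in> (range ?k)\<^sup>*"
        using r1 r2 by (cases u; cases v) auto
    qed
    ultimately show ?thesis by simp
  qed
  have img2: "\<kappa> \<in> ori_of_vertex \<iota> ` {a. a extreme_point_of voronoi_cell (Qmat \<iota>)}"
    if "is_orientation \<kappa>" "strongly_connected_ori \<kappa>" for \<kappa>
  proof -
    have ko: "\<kappa> e = (V2, V1) \<or> \<kappa> e = (V1, V2)" for e using that(1) unfolding is_orientation_def by blast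
    have get: "\<exists>e. \<kappa> e = (u, v)" if uv: "u \<noteq> v" for u v
    proof -
      have "(u, v) \<in> (range \<kappa>)\<^sup>*" using \<open>strongly_connected_ori \<kappa>\<close> unfolding strongly_connected_ori_def by blast
      then show ?thesis
      proof (rule converse_rtranclE)
        assume "u = v" then show ?thesis using uv by simp
      next
        fix y assume "(u, y) \<in> range \<kappa>"
        then obtain e where "\<kappa> e = (u, y)" by auto
        then have "\<kappa> e = (u, v)" using ko[of e] uv by (cases u; cases v; cases y) auto
        then show ?thesis by blast
      qed
    qed
    obtain e1 where e1: "\<kappa> e1 = (V2, V1)" using get[of V2 V1] by auto
    obtain e2 where e2: "\<kappa> e2 = (V1, V2)" using get[of V1 V2] by auto
    define S where "S = {e. \<kappa> e = (V1, V2)}"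
    define N where "N = real CARD('g option)"
    define t where "t = real (card S) / N"
    have Npos: "N > 0" unfolding N_def by (simp add: finite_UNIV_card_ge_0)
    have cpos: "card S > 0" unfolding S_def using e2 by (subst card_gt_0_iff) auto
    have "e1 \<notin> S" unfolding S_def using e1 by auto
    then have "S \<subset> UNIV" by blast
    then have "card S < CARD('g option)" by (intro psubset_card_mono) auto
    then have clt: "real (card S) < N" unfolding N_def by simp
    have tpos: "0 < t" unfolding t_def using cpos Npos by simp
    have tlt: "t < 1" unfolding t_def using clt Npos by simp
    have Nt: "N * t = real (card S)" unfolding t_def using Npos by simp
    define x :: "real ^ ('g option)" where "x = (\<chi> e. t - (if e \<in> S then 1 else 0))"
    have xv: "x $ e = t - (if e \<in> S then 1 else 0)" for e unfolding x_def by simp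
    have cs: "(\<Sum>e\<in>UNIV. (if e \<in> S then 1 else 0 :: real)) = real (card S)"
      by (simp add: sum.If_cases)
    have sx: "(\<Sum>e\<in>UNIV. x $ e) = 0"
      unfolding xv sum_subtractf cs using Nt unfolding N_def by simp
    define a where "a = (\<chi> i. - x $ Some i)"
    have Xa: "XX a = x" unfolding a_def by (rule XX_surj[OF sx])
    have vals: "XX a $ e = t \<or> XX a $ e = t - 1" for e unfolding Xa xv by simp
    have "e1 \<notin> S" "e2 \<in> S" unfolding S_def using e1 e2 by auto
    then have j0: "XX a $ e1 = t" and l0: "XX a $ e2 = t - 1" unfolding Xa xv by auto
    have E: "a extreme_point_of voronoi_cell (Qmat \<iota>)" by (rule ext_suff[OF vals j0 l0])
    have "ori_of_vertex \<iota> a = \<kappa>"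
    proof
      fix e
      have "ori_of_vertex \<iota> a e = (if XX a $ e > 0 then (V2, V1) else (V1, V2))"
        using K[OF ori nz[OF E]] .
      then show "ori_of_vertex \<iota> a e = \<kappa> e"
        using ko[of e] tpos tlt unfolding Xa xv S_def by auto
    qed
    then show ?thesis using E by blast
  qed
  have "bij_betw (ori_of_vertex \<iota>) {a. a extreme_point_of voronoi_cell (Qmat \<iota>)}
                 {\<kappa>. is_orientation \<kappa> \<and> strongly_connected_ori \<kappa>}"
    unfolding bij_betw_def
  proof
    show "inj_on (ori_of_vertex \<iota>) {a. a extreme_point_of voronoi_cell (Qmat \<iota>)}" by (rule inj)
    show "ori_of_vertex \<iota> ` {a. a extreme_point_of voronoi_cell (Qmat \<iota>)} =
          {\<kappa>. is_orientation \<kappa> \<and> strongly_connected_ori \<kappa>}"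
      using img1 img2 by blast
  qed
  then show ?thesis using P1 P3 by blast
qed

end
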